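(* For every even $n\ge 6$, the honeycomb toroidal graph $\mathrm{HTG}(1,n,3)$ is even pancyclic, i.e. it contains a cycle of length $L$ for every even $L$ with $4\le L\le n$.
   Context: For $m=1$, even $n\ge 6$ and odd $\ell$ with $\ell\not\equiv\pm1\pmod n$, the honeycomb toroidal graph $\mathrm{HTG}(1,n,\ell)$ has vertex set $\{u_j: j\in\mathbb{Z}_n\}$ and edges $u_ju_{j+1}$ for all $j$ (vertical edges) and $u_ju_{j+\ell}$ for all odd $j$ (jump edges), subscripts modulo $n$. *)

theory Defs
  imports Main
begin

text \<open>Honeycomb toroidal graph HTG(1,n,l): vertices u_0,...,u_(n-1), represented by
  the naturals 0..n-1 (indices taken mod n).\<close>

definition htg1_adj :: "nat \<Rightarrow> nat \<Rightarrow> nat \<Rightarrow> nat \<Rightarrow> bool" where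
  "htg1_adj n l i j \<longleftrightarrow> i < n \<and> j < n \<and>
     (j = (i + 1) mod n \<or> i = (j + 1) mod n \<or>
      (odd i \<and> j = (i + l) mod n) \<or> (odd j \<and> i = (j + l) mod n))"

definition htg1_has_cycle :: "nat \<Rightarrow> nat \<Rightarrow> nat \<Rightarrow> bool" where
  "htg1_has_cycle n l L \<longleftrightarrow> 3 \<le> L \<and>
     (\<exists>vs. length vs = L \<and> distinct vs \<and> set vs \<subseteq> {0..<n} \<and>
        (\<forall>k<L. htg1_adj n l (vs ! k) (vs ! ((k + 1) mod L))))"

definition htg1_even_pancyclic :: "nat \<Rightarrow> nat \<Rightarrow> bool" where
  "htg1_even_pancyclic n l \<longleftrightarrow>
     (\<forall>L. even L \<and> 4 \<le> L \<and> L \<le> n \<longrightarrow> htg1_has_cycle n l L)"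

end

theory Submission
  imports Defs
begin

definition cyc :: "nat \<Rightarrow> nat \<Rightarrow> nat" where
  "cyc m k = (if k < m then 4*(k div 2) + 2 + k mod 2
              else 4*((2*m - k) div 2) + (2*m-k) mod 2)"

lemma cyc_e0: "2*q < m \<Longrightarrow> cyc m (2*q) = 4*q+2" by (simp add: cyc_def)
lemma cyc_e1: "2*q+1 < m \<Longrightarrow> cyc m (2*q+1) = 4*q+3" by (simp add: cyc_def)
lemma cyc_h0: "\<not> k < m \<Longrightarrow> 2*m-k = 2*q \<Longrightarrow> cyc m k = 4*q" by (simp add: cyc_def)
lemma cyc_h1: "\<not> k < m \<Longrightarrow> 2*m-k = 2*q+1 \<Longrightarrow> cyc m k = 4*q+1" by (simp add: cyc_def)

lemma par: obtains q where "(k::nat) = 2*q" | q where "k = 2*q+1" by (metis oddE evenE)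

lemma aux4: "4*(x::nat) + r = 4*y + s \<Longrightarrow> r < 2 \<Longrightarrow> s < 2 \<Longrightarrow> x = y \<and> r = s"
  by presburger
lemma f_inj: "4*((a::nat) div 2) + a mod 2 = 4*(b div 2) + b mod 2 \<Longrightarrow> a = b"
proof -
  assume h: "4*((a::nat) div 2) + a mod 2 = 4*(b div 2) + b mod 2"
  have "a mod 2 < 2" "b mod 2 < 2" by auto
  then have "a div 2 = b div 2 \<and> a mod 2 = b mod 2" using h aux4 by blast
  then show ?thesis by (metis div_mult_mod_eq)
qed
lemma m42: "(4*(q::nat)+2) mod 4 = 2" "(4*(q::nat)+3) mod 4 = 3" "(4*(q::nat)+1) mod 4 = 1" "(4*(q::nat)) mod 4 = 0"
  by presburger+

lemma cyc_lo_val: "k < m \<Longrightarrow> \<exists>q. cyc m k = 4*q+2 \<or> cyc m k = 4*q+3"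
proof (cases k rule: par)
  case (1 q) assume "k < m" then show ?thesis using 1 cyc_e0[of q m] by blast
next
  case (2 q) assume "k < m" then show ?thesis using 2 cyc_e1[of q m] by blast
qed
lemma cyc_hi_val: "\<not> k < m \<Longrightarrow> \<exists>q. cyc m k = 4*q \<or> cyc m k = 4*q+1"
proof (cases "2*m-k" rule: par)
  case (1 q) assume "\<not> k < m" then show ?thesis using 1 cyc_h0[of k m q] by blast
next
  case (2 q) assume "\<not> k < m" then show ?thesis using 2 cyc_h1[of k m q] by blast
qed
lemma cyc_mod_lo: "k < m \<Longrightarrow> cyc m k mod 4 \<ge> 2"
proof -
  assume "k < m"
  then obtain q where "cyc m k = 4*q+2 \<or> cyc m k = 4*q+3" using cyc_lo_val by blast
  then show ?thesis using m42(1,2)[of q] by auto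
qed
lemma cyc_mod_hi: "\<not> k < m \<Longrightarrow> cyc m k mod 4 < 2"
proof -
  assume "\<not> k < m"
  then obtain q where "cyc m k = 4*q \<or> cyc m k = 4*q+1" using cyc_hi_val by blast
  then show ?thesis using m42(3,4)[of q] by auto
qed

lemma cyc_inj: "k1 < 2*m \<Longrightarrow> k2 < 2*m \<Longrightarrow> cyc m k1 = cyc m k2 \<Longrightarrow> k1 = k2"
proof -
  assume a: "k1 < 2*m" "k2 < 2*m" "cyc m k1 = cyc m k2"
  show "k1 = k2"
  proof (cases "k1 < m")
    case True
    then have "k2 < m" using a(3) cyc_mod_lo[of k1 m] cyc_mod_hi[of k2 m] by (cases "k2 < m") auto
    then have "4*(k1 div 2) + k1 mod 2 = 4*(k2 div 2) + k2 mod 2" using True a(3) unfolding cyc_def by simp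
    then show ?thesis by (rule f_inj)
  next
    case False
    then have "\<not> k2 < m" using a(3) cyc_mod_lo[of k2 m] cyc_mod_hi[of k1 m] by (cases "k2 < m") auto
    then have "4*((2*m-k1) div 2) + (2*m-k1) mod 2 = 4*((2*m-k2) div 2) + (2*m-k2) mod 2"
      using False a(3) unfolding cyc_def by simp
    then have "2*m-k1 = 2*m-k2" by (rule f_inj)
    then show ?thesis using a by linarith
  qed
qed

lemma cyc_range: "k < 2*m \<Longrightarrow> 1 \<le> cyc m k \<and> cyc m k \<le> 2*m"
proof (cases "k < m")
  case True
  assume "k < 2*m"
  show ?thesis
  proof (cases k rule: par)
    case (1 q) then show ?thesis using True \<open>k < 2*m\<close> cyc_e0[of q m] by simp
  next
    case (2 q) then show ?thesis using True \<open>k < 2*m\<close> cyc_e1[of q m] by simp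
  qed
next
  case False
  assume "k < 2*m"
  show ?thesis
  proof (cases "2*m-k" rule: par)
    case (1 q) then show ?thesis using False \<open>k < 2*m\<close> cyc_h0[of k m q] by (simp; linarith)
  next
    case (2 q) then show ?thesis using False \<open>k < 2*m\<close> cyc_h1[of k m q] by (simp; linarith)
  qed
qed

definition rel :: "nat \<Rightarrow> nat \<Rightarrow> bool" where
  "rel i j \<longleftrightarrow> j = i+1 \<or> i = j+1 \<or> (odd i \<and> j = i+3) \<or> (odd j \<and> i = j+3)"

lemma cyc_rel: "2 \<le> m \<Longrightarrow> k < 2*m \<Longrightarrow> rel (cyc m k) (cyc m ((k+1) mod (2*m)))"
proof -
  assume m: "2 \<le> m" and k: "k < 2*m"
  consider "k + 1 < m" | "k + 1 = m" | "m \<le> k \<and> k + 1 < 2*m" | "k + 1 = 2*m" using k by linarith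
  then show ?thesis
  proof cases
    case 1
    then have e: "(k+1) mod (2*m) = k+1" by simp
    show ?thesis
    proof (cases k rule: par)
      case (1 q) then show ?thesis using \<open>k+1<m\<close> e cyc_e0[of q m] cyc_e1[of q m] by (simp add: rel_def)
    next
      case (2 q)
      have "k+1 = 2*(q+1)" using 2 by simp
      then show ?thesis using \<open>k+1<m\<close> e 2 cyc_e0[of "q+1" m] cyc_e1[of q m] by (simp add: rel_def)
    qed
  next
    case 2
    then have e: "(k+1) mod (2*m) = k+1" using m by simp
    show ?thesis
    proof (cases k rule: par)
      case (1 q)
      have "cyc m (k+1) = 4*q+1" using 1 2 by (intro cyc_h1) auto
      then show ?thesis using 2 e 1 cyc_e0[of q m] by (simp add: rel_def)
    next
      case (2 q)
      have "cyc m (k+1) = 4*(q+1)" using 2 \<open>k+1=m\<close> by (intro cyc_h0) auto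
      then show ?thesis using \<open>k+1=m\<close> e 2 cyc_e1[of q m] by (simp add: rel_def)
    qed
  next
    case 3
    then have e: "(k+1) mod (2*m) = k+1" by simp
    show ?thesis
    proof (cases "2*m-k" rule: par)
      case (1 q)
      have "q \<noteq> 0" using 1 3 by auto
      then obtain p where p: "q = p+1" using not0_implies_Suc by auto
      have a: "cyc m k = 4*p+4" using 1 3 p cyc_h0[of k m "p+1"] by simp
      have b: "cyc m (k+1) = 4*p+1" using 1 3 p by (intro cyc_h1) auto
      have "odd (4*p+1)" by simp
      then show ?thesis using a b e by (simp add: rel_def)
    next
      case (2 q)
      have a: "cyc m k = 4*q+1" using 2 3 by (intro cyc_h1) auto
      have b: "cyc m (k+1) = 4*q" using 2 3 by (intro cyc_h0) auto
      then show ?thesis using a b e by (simp add: rel_def)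
    qed
  next
    case 4
    then have e: "(k+1) mod (2*m) = 0" by simp
    have a: "cyc m k = 1" using 4 m cyc_h1[of k m 0] by simp
    have b: "cyc m 0 = 2" using cyc_e0[of 0 m] m by simp
    show ?thesis using a b e by (simp add: rel_def)
  qed
qed

lemma adj_of: "i < n \<Longrightarrow> j < n \<Longrightarrow>
   rel i j \<Longrightarrow> htg1_adj n 3 i j"
  unfolding rel_def
proof (elim disjE conjE)
  assume "i < n" "j < n" "j = i + 1"
  then show ?thesis unfolding htg1_adj_def by simp
next
  assume "i < n" "j < n" "i = j + 1"
  then show ?thesis unfolding htg1_adj_def by simp
next
  assume "i < n" "j < n" "odd i" "j = i + 3"
  then show ?thesis unfolding htg1_adj_def by simp
next
  assume "i < n" "j < n" "odd j" "i = j + 3"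
  then show ?thesis unfolding htg1_adj_def by simp
qed

lemma small_cycle:
  assumes "2 \<le> m" "2*m < n"
  shows "htg1_has_cycle n 3 (2*m)"
proof -
  define vs where "vs = map (cyc m) [0..<2*m]"
  have l: "length vs = 2*m" by (simp add: vs_def)
  have d: "distinct vs" unfolding vs_def distinct_map
  proof
    show "distinct [0..<2*m]" by simp
    show "inj_on (cyc m) (set [0..<2*m])"
    proof (rule inj_onI)
      fix x y assume "x \<in> set [0..<2*m]" "y \<in> set [0..<2*m]" "cyc m x = cyc m y"
      then show "x = y" using cyc_inj[of x m y] by simp
    qed
  qed
  have s: "set vs \<subseteq> {0..<n}"
  proof
    fix x assume "x \<in> set vs"
    then obtain k where k: "k < 2*m" "x = cyc m k" by (auto simp: vs_def)
    then have "x \<le> 2*m" using cyc_range by blast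
    then show "x \<in> {0..<n}" using assms by simp
  qed
  have a: "\<forall>k<2*m. htg1_adj n 3 (vs ! k) (vs ! ((k + 1) mod (2*m)))"
  proof (intro allI impI)
    fix k assume k: "k < 2*m"
    have k1: "(k+1) mod (2*m) < 2*m" using k by simp
    have e1: "vs ! k = cyc m k" using k by (simp add: vs_def)
    have e2: "vs ! ((k+1) mod (2*m)) = cyc m ((k+1) mod (2*m))" using k1 by (simp add: vs_def del: upt.simps)
    have r1: "cyc m k < n" using cyc_range[OF k] assms by linarith
    have r2: "cyc m ((k+1) mod (2*m)) < n" using cyc_range[OF k1] assms by linarith
    show "htg1_adj n 3 (vs ! k) (vs ! ((k + 1) mod (2*m)))"
      unfolding e1 e2 by (rule adj_of[OF r1 r2 cyc_rel[OF assms(1) k]])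
  qed
  have "3 \<le> 2*m" using assms by simp
  then show ?thesis unfolding htg1_has_cycle_def using l d s a by (intro conjI exI[of _ vs]) (simp_all only:)
qed

lemma full_cycle:
  assumes "3 \<le> n"
  shows "htg1_has_cycle n 3 n"
proof -
  have a: "\<forall>k<n. htg1_adj n 3 ([0..<n] ! k) ([0..<n] ! ((k + 1) mod n))"
  proof (intro allI impI)
    fix k assume k: "k < n"
    have k1: "(k+1) mod n < n" using k by simp
    have e1: "[0..<n] ! k = k" using k by simp
    have e2: "[0..<n] ! ((k+1) mod n) = (k+1) mod n" using k1 by (simp del: upt.simps)
    show "htg1_adj n 3 ([0..<n] ! k) ([0..<n] ! ((k + 1) mod n))"
      unfolding e1 e2 htg1_adj_def using k k1 by blast
  qed
  have s: "set [0..<n] \<subseteq> {0..<n}" by simp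
  have "distinct [0..<n]" "length [0..<n] = n" by simp_all
  then show ?thesis unfolding htg1_has_cycle_def using assms a s by (intro conjI exI[of _ "[0..<n]"]) (simp_all only:)
qed

theorem mainTheorem10:
  fixes n :: nat
  assumes "even n" and "6 \<le> n"
  shows "htg1_even_pancyclic n 3"
  unfolding htg1_even_pancyclic_def
proof (intro allI impI)
  fix L assume L: "even L \<and> 4 \<le> L \<and> L \<le> n"
  then obtain m where m: "L = 2*m" by blast
  show "htg1_has_cycle n 3 L"
  proof (cases "L = n")
    case True then show ?thesis using full_cycle[of n] assms by simp
  next
    case False
    then have "2 \<le> m" "2*m < n" using L m by linarith+
    then show ?thesis using small_cycle[of m n] m by simp
  qed
qed

end
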